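(* Let $P,Q\subseteq M_{\mathbb R}$ be lattice polytopes such that $P+Q$ is a reflexive polytope with respect to some lattice point. Let $p\in P$ be a lattice point, $L:=\mathrm{lin}(P-p)$, and $\pi:M_{\mathbb R}\to M_{\mathbb R}/L$ the projection. Then $\pi(P+Q)$ is a reflexive polytope with respect to the lattice $\pi(M)$ (with respect to some lattice point).
   Context: $M\cong\mathbb Z^d$, $N$ its dual lattice. A lattice polytope $\Delta$ is reflexive with respect to a lattice point $m$ if $m$ lies in the interior of $\Delta$ and $\{y:\langle x,y\rangle\ge-1\ \forall x\in\Delta-m\}$ is a lattice polytope. (If $\dim P=\dim(P+Q)$ the image is a point, regarded as a $0$-dimensional reflexive polytope.) *)

theory Defs
  imports "HOL-Analysis.Analysis"
begin

text \<open>The lattice M = Z^d inside M_R = R^d.\<close>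
definition int_points :: "(real^'n) set" where
  "int_points = {x. \<forall>i. x $ i \<in> \<int>}"

definition msum :: "(real^'n) set \<Rightarrow> (real^'n) set \<Rightarrow> (real^'n) set" where
  "msum A B = {a + b | a b. a \<in> A \<and> b \<in> B}"

definition lattice_polytope_wrt :: "(real^'n) set \<Rightarrow> (real^'n) set \<Rightarrow> bool" where
  "lattice_polytope_wrt Lam D \<longleftrightarrow>
     (\<exists>S. finite S \<and> S \<noteq> {} \<and> S \<subseteq> Lam \<and> D = convex hull S)"

text \<open>Dual lattice of a lattice Lam spanning the linear subspace V, where the dual
  space of V is identified with V via the standard inner product.\<close>
definition dual_lattice :: "(real^'n) set \<Rightarrow> (real^'n) set \<Rightarrow> (real^'n) set" where
  "dual_lattice V Lam = {y \<in> V. \<forall>v\<in>Lam. v \<bullet> y \<in> \<int>}"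

definition polar_wrt :: "(real^'n) set \<Rightarrow> (real^'n) set \<Rightarrow> real^'n \<Rightarrow> (real^'n) set" where
  "polar_wrt V D m = {y \<in> V. \<forall>x\<in>D. (x - m) \<bullet> y \<ge> -1}"

definition reflexive_wrt ::
  "(real^'n) set \<Rightarrow> (real^'n) set \<Rightarrow> (real^'n) set \<Rightarrow> real^'n \<Rightarrow> bool" where
  "reflexive_wrt V Lam D m \<longleftrightarrow>
     lattice_polytope_wrt Lam D \<and> D \<subseteq> V \<and> m \<in> Lam \<and>
     (\<exists>e>0. ball m e \<inter> V \<subseteq> D) \<and>
     lattice_polytope_wrt (dual_lattice V Lam) (polar_wrt V D m)"

end

theory Submission
  imports Defs
begin

lemma range_subspace:
  fixes f :: "real^'n \<Rightarrow> real^'n"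
  assumes "linear f"
  shows "subspace (range f)"
  unfolding subspace_def
proof (intro conjI ballI allI)
  show "0 \<in> range f" using linear_0[OF assms] by (metis rangeI)
next
  fix x y assume "x \<in> range f" "y \<in> range f"
  then obtain a b where "x = f a" "y = f b" by auto
  then show "x + y \<in> range f" using linear_add[OF assms, of a b] by (metis rangeI)
next
  fix c :: real and x assume "x \<in> range f"
  then obtain a where "x = f a" by auto
  then show "c *\<^sub>R x \<in> range f" using linear_scale[OF assms, of c a] by (metis rangeI)
qed

lemma adj_zero:
  fixes f :: "real^'n \<Rightarrow> real^'n"
  assumes lf: "linear f" and "\<And>w. z \<bullet> adjoint f w = 0"
  shows "f z = 0"
proof -
  have "f z \<bullet> f z = 0" using assms(2)[of "f z"] adjoint_works[OF lf, of z "f z"] by simp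
  then show ?thesis by simp
qed

lemma adj_inj:
  fixes f :: "real^'n \<Rightarrow> real^'n"
  assumes lf: "linear f" and "y1 \<in> range f" "y2 \<in> range f" "adjoint f y1 = adjoint f y2"
  shows "y1 = y2"
proof -
  obtain t where t: "y1 - y2 = f t" using assms(2,3)
    by (metis (no_types, lifting) imageE lf linear_diff rangeI)
  have lA: "linear (adjoint f)" using adjoint_linear[OF lf] .
  have "adjoint f (y1 - y2) = 0" using assms(4) linear_diff[OF lA] by simp
  then have "(y1 - y2) \<bullet> (y1 - y2) = 0"
    using adjoint_works[OF lf, of t "y1 - y2"] t by simp
  then show ?thesis by simp
qed

lemma adj_surj:
  fixes f :: "real^'n \<Rightarrow> real^'n"
  assumes lf: "linear f" and ort: "\<And>k. f k = 0 \<Longrightarrow> e \<bullet> k = 0"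
  shows "\<exists>v\<in>range f. adjoint f v = e"
proof -
  have lA: "linear (adjoint f)" using adjoint_linear[OF lf] .
  have spA: "span (range (adjoint f)) = range (adjoint f)"
    using range_subspace[OF lA] span_eq_iff by blast
  obtain y z where y: "y \<in> span (range (adjoint f))"
    and z: "\<And>w. w \<in> span (range (adjoint f)) \<Longrightarrow> orthogonal z w" and e: "e = y + z"
    using orthogonal_subspace_decomp_exists by blast
  have "f z = 0" using adj_zero[OF lf] z spA unfolding orthogonal_def by auto
  then have "e \<bullet> z = 0" using ort by blast
  moreover have "y \<bullet> z = 0" using z[OF y] unfolding orthogonal_def by (simp add: inner_commute)
  ultimately have "z \<bullet> z = 0" using e by (simp add: inner_add_left)
  then have "z = 0" by simp
  with e y spA obtain y' where y': "adjoint f y' = e" by auto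
  have spf: "span (range f) = range f"
    using range_subspace[OF lf] span_eq_iff by blast
  obtain v k where v: "v \<in> span (range f)"
    and k: "\<And>w. w \<in> span (range f) \<Longrightarrow> orthogonal k w" and ye: "y' = v + k"
    using orthogonal_subspace_decomp_exists by blast
  have "adjoint f k = 0"
  proof -
    have "adjoint f k \<bullet> adjoint f k = k \<bullet> f (adjoint f k)"
      using adjoint_clauses(2)[OF lf] by simp
    also have "\<dots> = 0" using k[of "f (adjoint f k)"] spf unfolding orthogonal_def by auto
    finally show ?thesis by simp
  qed
  then have "adjoint f v = e" using y' ye linear_add[OF lA] by simp
  then show ?thesis using v spf by auto
qed

lemma ext_pt:
  fixes P Q S :: "(real^'n) set" and m p w :: "real^'n"
  assumes S: "finite S" and D: "convex hull S = polar_wrt UNIV (msum P Q) m"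
    and cpt: "compact (msum P Q)" and ne: "msum P Q \<noteq> {}" and pP: "p \<in> P"
    and w: "w extreme_point_of {u \<in> convex hull S. \<forall>x\<in>P. (x - p) \<bullet> u = 0}"
  shows "w \<in> insert 0 S"
proof -
  define C where "C = {u \<in> convex hull S. \<forall>x\<in>P. (x - p) \<bullet> u = 0}"
  have wC: "w \<in> C" using w unfolding C_def extreme_point_of_def by blast
  have polar_mem: "u \<in> convex hull S \<longleftrightarrow> (\<forall>x\<in>msum P Q. (x - m) \<bullet> u \<ge> -1)" for u
    using D by (auto simp: polar_wrt_def)
  have sub: "subspace {u. \<forall>x\<in>P. (x - p) \<bullet> u = 0}"
    unfolding subspace_def by (auto simp: inner_add_right)
  have convC: "convex C" unfolding C_def
    using convex_Int[OF convex_convex_hull subspace_imp_convex[OF sub]] by (simp add: Int_def)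
  show ?thesis
  proof (cases "\<exists>x0\<in>msum P Q. (x0 - m) \<bullet> w \<le> -1")
    case False
    have "continuous_on (msum P Q) (\<lambda>x. (x - m) \<bullet> w)" by (intro continuous_intros)
    then obtain x1 where x1: "x1 \<in> msum P Q" "\<And>y. y \<in> msum P Q \<Longrightarrow> (x1 - m) \<bullet> w \<le> (y - m) \<bullet> w"
      using continuous_attains_inf[OF cpt ne] by blast
    define \<mu> where "\<mu> = (x1 - m) \<bullet> w"
    have \<mu>: "\<mu> > -1" using False x1 \<mu>_def by force
    define c where "c = (if \<mu> \<ge> 0 then 2 else min 2 (-1/\<mu>))"
    have c1: "c > 1" using \<mu> by (auto simp: c_def field_simps)
    have cmu: "c * ((y - m) \<bullet> w) \<ge> -1" if "y \<in> msum P Q" for y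
    proof (cases "\<mu> \<ge> 0")
      case True
      then show ?thesis using x1(2)[OF that] c1 \<mu>_def
        by (smt (verit) mult_nonneg_nonneg)
    next
      case False
      have "c \<le> -1/\<mu>" using False by (simp add: c_def)
      then have "c * \<mu> \<ge> -1" using False by (simp add: field_simps)
      moreover have "c * \<mu> \<le> c * ((y - m) \<bullet> w)" using x1(2)[OF that] c1 \<mu>_def by simp
      ultimately show ?thesis by simp
    qed
    have cw: "c *\<^sub>R w \<in> C"
    proof -
      have "c *\<^sub>R w \<in> convex hull S" unfolding polar_mem using cmu by simp
      moreover have "\<forall>x\<in>P. (x - p) \<bullet> (c *\<^sub>R w) = 0" using wC C_def by simp
      ultimately show ?thesis unfolding C_def by simp
    qed
    have zC: "0 \<in> C" unfolding C_def using polar_mem by simp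
    show ?thesis
    proof (rule ccontr)
      assume "w \<notin> insert 0 S"
      then have w0: "w \<noteq> 0" by simp
      have "w \<in> open_segment 0 (c *\<^sub>R w)"
        unfolding in_segment
      proof (intro conjI exI[of _ "1/c"])
        show "0 \<noteq> c *\<^sub>R w" using w0 c1 by simp
        show "0 < 1/c" "1/c < 1" using c1 by auto
        show "w = (1 - 1/c) *\<^sub>R 0 + (1/c) *\<^sub>R c *\<^sub>R w" using c1 by simp
      qed
      then show False using w cw zC unfolding C_def extreme_point_of_def by blast
    qed
  next
    case True
    then obtain x0 where x0: "x0 \<in> msum P Q" "(x0 - m) \<bullet> w \<le> -1" by blast
    then obtain a b where ab: "a \<in> P" "b \<in> Q" "x0 = a + b" unfolding msum_def by blast
    have "w \<in> convex hull S" using wC C_def by simp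
    then obtain u where u0: "\<And>x. x \<in> S \<Longrightarrow> 0 \<le> u x" and u1: "sum u S = 1"
      and uw: "(\<Sum>x\<in>S. u x *\<^sub>R x) = w"
      unfolding convex_hull_finite[OF S] by blast
    have ge: "(x - m) \<bullet> s \<ge> -1" if "s \<in> S" "x \<in> msum P Q" for s x
      using polar_mem[of s] hull_subset[of S convex] that by auto
    have inner_w: "(\<Sum>s\<in>S. u s * (y \<bullet> s)) = y \<bullet> w" for y
      unfolding uw[symmetric] by (simp add: inner_sum_right)
    have "(\<Sum>s\<in>S. u s * ((x0 - m) \<bullet> s + 1)) = (x0 - m) \<bullet> w + 1"
      using inner_w[of "x0 - m"] u1 by (simp add: distrib_left sum.distrib)
    note eqs = this
    have nn: "\<And>s. s \<in> S \<Longrightarrow> 0 \<le> u s * ((x0 - m) \<bullet> s + 1)"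
    proof -
      fix s assume s: "s \<in> S"
      have "0 \<le> (x0 - m) \<bullet> s + 1" using ge[OF s x0(1)] by simp
      then show "0 \<le> u s * ((x0 - m) \<bullet> s + 1)" using u0[OF s] by simp
    qed
    have "(\<Sum>s\<in>S. u s * ((x0 - m) \<bullet> s + 1)) = 0"
    proof -
      have "0 \<le> (\<Sum>s\<in>S. u s * ((x0 - m) \<bullet> s + 1))" using nn by (simp add: sum_nonneg)
      then show "(\<Sum>s\<in>S. u s * ((x0 - m) \<bullet> s + 1)) = 0" using eqs x0(2) by linarith
    qed
    then have tight: "\<And>s. s \<in> S \<Longrightarrow> u s * ((x0 - m) \<bullet> s + 1) = 0"
      using sum_nonneg_eq_0_iff[of S "\<lambda>s. u s * ((x0 - m) \<bullet> s + 1)"] S nn by auto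
    have zero: "(a' - a) \<bullet> s = 0" if a': "a' \<in> P" and s: "s \<in> S" "u s > 0" for a' s
    proof -
      have nn2: "0 \<le> u t * ((a' - a) \<bullet> t)" if t: "t \<in> S" for t
      proof (cases "u t > 0")
        case True
        have "(x0 - m) \<bullet> t = -1" using tight[OF t] True by simp
        moreover have "a' + b \<in> msum P Q" using a' ab unfolding msum_def by blast
        then have "(a' + b - m) \<bullet> t \<ge> -1" using ge t by blast
        ultimately have "(a' - a) \<bullet> t \<ge> 0" using ab
          by (simp add: inner_diff_left inner_add_left)
        then show ?thesis using True by simp
      next
        case False
        then show ?thesis using u0[OF t] by simp
      qed
      have "(\<Sum>t\<in>S. u t * ((a' - a) \<bullet> t)) = (a' - a) \<bullet> w" using inner_w by blast
      also have "\<dots> = (a' - p) \<bullet> w - (a - p) \<bullet> w" by (simp add: inner_diff_left)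
      also have "\<dots> = 0" using wC a' ab(1) unfolding C_def by simp
      finally have "\<forall>t\<in>S. u t * ((a' - a) \<bullet> t) = 0"
        using sum_nonneg_eq_0_iff[of S "\<lambda>t. u t * ((a' - a) \<bullet> t)"] S nn2 by auto
      then show ?thesis using s by force
    qed
    define T where "T = {s \<in> S. u s > 0}"
    have TS: "T \<subseteq> S" and fT: "finite T" using S by (auto simp: T_def)
    have TC: "T \<subseteq> C"
    proof
      fix s assume s: "s \<in> T"
      have "(x - p) \<bullet> s = 0" if x: "x \<in> P" for x
      proof -
        have "(x - a) \<bullet> s = 0" "(p - a) \<bullet> s = 0" using zero x pP s T_def by auto
        then have "(x - a) \<bullet> s - (p - a) \<bullet> s = 0" by simp
        then show ?thesis by (simp add: inner_diff_left)
      qed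
      then show "s \<in> C" using s TS hull_subset[of S convex] unfolding C_def by auto
    qed
    have zS: "\<forall>x\<in>S - T. u x = 0" using u0 by (force simp: T_def)
    have "w \<in> convex hull T"
      unfolding convex_hull_finite[OF fT]
    proof (intro CollectI exI[of _ u] conjI)
      show "\<forall>x\<in>T. 0 \<le> u x" using u0 TS by auto
      show "sum u T = 1" using u1 sum.mono_neutral_left[OF S TS zS] by simp
      show "(\<Sum>x\<in>T. u x *\<^sub>R x) = w" using uw sum.mono_neutral_left[OF S TS, of "\<lambda>x. u x *\<^sub>R x"] zS by simp
    qed
    moreover have "convex hull T \<subseteq> C" using TC convC by (simp add: hull_minimal)
    ultimately have "w extreme_point_of convex hull T"
      using w unfolding C_def[symmetric] extreme_point_of_def by blast
    then have "w \<in> T" by (rule extreme_point_of_convex_hull)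
    then show ?thesis using TS by auto
  qed
qed

theorem corollary6p6:
  fixes P Q :: "(real^'n) set" and p :: "real^'n" and \<pi> :: "real^'n \<Rightarrow> real^'n"
  assumes "lattice_polytope_wrt int_points P"
    and "lattice_polytope_wrt int_points Q"
    and "\<exists>m. reflexive_wrt UNIV int_points (msum P Q) m"
    and "p \<in> P" and "p \<in> int_points"
    and "linear \<pi>"
    and "{x. \<pi> x = 0} = span {x - p | x. x \<in> P}"
  shows "\<exists>m. reflexive_wrt (range \<pi>) (\<pi> ` int_points) (\<pi> ` msum P Q) m"
proof -
  note lf = assms(6)
  obtain m where refl: "reflexive_wrt UNIV int_points (msum P Q) m" using assms(3) by blast
  obtain S0 where S0: "finite S0" "S0 \<noteq> {}" "S0 \<subseteq> int_points" "msum P Q = convex hull S0"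
    using refl unfolding reflexive_wrt_def lattice_polytope_wrt_def by blast
  have mZ: "m \<in> int_points" using refl unfolding reflexive_wrt_def by blast
  obtain e0 where e0: "e0 > 0" "ball m e0 \<subseteq> msum P Q"
    using refl unfolding reflexive_wrt_def by auto
  obtain S where S: "finite S" "S \<noteq> {}" "S \<subseteq> dual_lattice UNIV int_points"
    "polar_wrt UNIV (msum P Q) m = convex hull S"
    using refl unfolding reflexive_wrt_def lattice_polytope_wrt_def by blast
  have cpt: "compact (msum P Q)" using S0 by (simp add: compact_convex_hull finite_imp_compact)
  have ne: "msum P Q \<noteq> {}" using S0 by simp
  define A where "A = adjoint \<pi>"
  have lA: "linear A" unfolding A_def using adjoint_linear[OF lf] .
  have adj: "\<pi> x \<bullet> y = x \<bullet> A y" for x y unfolding A_def using adjoint_works[OF lf] by simp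
  define C where "C = {u \<in> convex hull S. \<forall>x\<in>P. (x - p) \<bullet> u = 0}"
  have sub: "subspace {u. \<forall>x\<in>P. (x - p) \<bullet> u = 0}"
    unfolding subspace_def by (auto simp: inner_add_right)
  have convC: "convex C" unfolding C_def
    using convex_Int[OF convex_convex_hull subspace_imp_convex[OF sub]] by (simp add: Int_def)
  have closedC: "closed C"
  proof -
    have "C = convex hull S \<inter> {u. \<forall>x\<in>P. (x - p) \<bullet> u = 0}" unfolding C_def by auto
    then show ?thesis using closed_subspace[OF sub] S(1)
      by (simp add: closed_Int compact_imp_closed compact_convex_hull finite_imp_compact)
  qed
  have compactC: "compact C"
  proof -
    have "C \<subseteq> convex hull S" unfolding C_def by auto
    moreover have "compact (convex hull S)" using S(1) by (simp add: compact_convex_hull finite_imp_compact)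
    ultimately show ?thesis using closedC compact_Int_closed[of "convex hull S" C]
      by (simp add: Int_absorb1)
  qed
  define E where "E = {x. x extreme_point_of C}"
  have CE: "C = convex hull E" unfolding E_def using Krein_Milman_Minkowski[OF compactC convC] .
  have ES: "E \<subseteq> insert 0 S"
  proof
    fix w assume "w \<in> E"
    then show "w \<in> insert 0 S"
      using ext_pt[OF S(1) S(4)[symmetric] cpt ne assms(4)] unfolding E_def C_def by blast
  qed
  have fE: "finite E" using ES S(1) finite_subset by blast
  have EC: "E \<subseteq> C" unfolding E_def extreme_point_of_def by blast
  have polar_mem: "u \<in> convex hull S \<longleftrightarrow> (\<forall>x\<in>msum P Q. (x - m) \<bullet> u \<ge> -1)" for u
    using S(4)[symmetric] by (auto simp: polar_wrt_def)
  have zC: "0 \<in> C" unfolding C_def using polar_mem by simp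
  have Ene: "E \<noteq> {}" using zC CE by auto
  have kerP: "\<pi> (x - p) = 0" if "x \<in> P" for x
  proof -
    have "x - p \<in> span {x - p | x. x \<in> P}" using that by (intro span_base) blast
    then show ?thesis using assms(7) by blast
  qed
  have surjE: "\<exists>v\<in>range \<pi>. A v = e" if "e \<in> C" for e
  proof -
    have "e \<bullet> k = 0" if k: "\<pi> k = 0" for k
    proof -
      have "k \<in> span {x - p | x. x \<in> P}" using k assms(7) by blast
      moreover have "orthogonal e y" if "y \<in> {x - p | x. x \<in> P}" for y
        using that \<open>e \<in> C\<close> unfolding C_def orthogonal_def by (auto simp: inner_commute)
      ultimately show ?thesis using orthogonal_to_span unfolding orthogonal_def by blast
    qed
    then show ?thesis unfolding A_def using adj_surj[OF lf] by blast
  qed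
  have "\<forall>e\<in>E. \<exists>v. v \<in> range \<pi> \<and> A v = e" using surjE EC by blast
  then obtain g where g0: "\<forall>e\<in>E. g e \<in> range \<pi> \<and> A (g e) = e"
    by (rule bchoice[elim_format]) blast
  then have g: "\<And>e. e \<in> E \<Longrightarrow> g e \<in> range \<pi> \<and> A (g e) = e" by blast
  have subR: "subspace (range \<pi>)" using range_subspace[OF lf] .
  have AgE: "A ` g ` E = E" using g by force
  have hullR: "convex hull (g ` E) \<subseteq> range \<pi>"
    using g subspace_imp_convex[OF subR] by (intro hull_minimal) auto
  have AC: "A ` (convex hull (g ` E)) = C"
    using convex_hull_linear_image[OF lA, of "g ` E"] AgE CE by simp
  have key: "(\<pi> x - \<pi> m) \<bullet> y = (x - m) \<bullet> A y" for x y
    using adj[of "x - m" y] linear_diff[OF lf] by simp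
  show ?thesis
  proof (intro exI[of _ "\<pi> m"])
    show "reflexive_wrt (range \<pi>) (\<pi> ` int_points) (\<pi> ` msum P Q) (\<pi> m)"
      unfolding reflexive_wrt_def
    proof (intro conjI)
      show "lattice_polytope_wrt (\<pi> ` int_points) (\<pi> ` msum P Q)"
        unfolding lattice_polytope_wrt_def
        using S0 convex_hull_linear_image[OF lf, of S0] by (intro exI[of _ "\<pi> ` S0"]) auto
      show "\<pi> ` msum P Q \<subseteq> range \<pi>" by auto
      show "\<pi> m \<in> \<pi> ` int_points" using mZ by auto
      show "\<exists>e>0. ball (\<pi> m) e \<inter> range \<pi> \<subseteq> \<pi> ` msum P Q"
      proof -
        obtain h where h: "linear h" "\<forall>v\<in>range \<pi>. \<pi> (h v) = v"
          using linear_exists_right_inverse_on[OF lf subspace_UNIV] by auto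
        obtain B where B: "B > 0" "\<And>x. norm (h x) \<le> B * norm x"
          using linear_bounded_pos[OF h(1)] by blast
        show ?thesis
        proof (intro exI[of _ "e0 / B"] conjI subsetI)
          show "e0 / B > 0" using e0 B by simp
          fix y assume y: "y \<in> ball (\<pi> m) (e0 / B) \<inter> range \<pi>"
          then obtain z where z: "y = \<pi> z" by auto
          have d: "y - \<pi> m = \<pi> (z - m)" using z linear_diff[OF lf] by simp
          define x where "x = m + h (y - \<pi> m)"
          have "norm (h (y - \<pi> m)) \<le> B * norm (y - \<pi> m)" using B by blast
          also have "\<dots> < B * (e0 / B)" using y B by (simp add: dist_norm norm_minus_commute pos_less_divide_eq mult.commute)
          also have "\<dots> = e0" using B by simp
          finally have "x \<in> ball m e0" unfolding x_def by (simp add: dist_norm)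
          then have "x \<in> msum P Q" using e0 by blast
          moreover have "\<pi> x = y"
            using h(2) d linear_add[OF lf] unfolding x_def by (metis add.commute diff_add_cancel rangeI)
          ultimately show "y \<in> \<pi> ` msum P Q" by blast
        qed
      qed
      show "lattice_polytope_wrt (dual_lattice (range \<pi>) (\<pi> ` int_points))
              (polar_wrt (range \<pi>) (\<pi> ` msum P Q) (\<pi> m))"
        unfolding lattice_polytope_wrt_def
      proof (intro exI[of _ "g ` E"] conjI)
        show "finite (g ` E)" using fE by simp
        show "g ` E \<noteq> {}" using Ene by simp
        show "g ` E \<subseteq> dual_lattice (range \<pi>) (\<pi> ` int_points)"
        proof
          fix y assume "y \<in> g ` E"
          then obtain e where e: "e \<in> E" "y = g e" by auto
          have "v \<bullet> e \<in> \<int>" if v: "v \<in> int_points" for v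
          proof (cases "e = 0")
            case True then show ?thesis by simp
          next
            case False
            then have "e \<in> S" using ES e by auto
            then show ?thesis using S(3) v unfolding dual_lattice_def by auto
          qed
          then show "y \<in> dual_lattice (range \<pi>) (\<pi> ` int_points)"
            unfolding dual_lattice_def using g[OF e(1)] e adj by auto
        qed
        show "polar_wrt (range \<pi>) (\<pi> ` msum P Q) (\<pi> m) = convex hull (g ` E)"
        proof
          show "polar_wrt (range \<pi>) (\<pi> ` msum P Q) (\<pi> m) \<subseteq> convex hull (g ` E)"
          proof
            fix y assume y: "y \<in> polar_wrt (range \<pi>) (\<pi> ` msum P Q) (\<pi> m)"
            then have yR: "y \<in> range \<pi>" unfolding polar_wrt_def by auto
            have "\<forall>x\<in>msum P Q. (x - m) \<bullet> A y \<ge> -1"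
              using y unfolding polar_wrt_def key[symmetric] by auto
            then have "A y \<in> convex hull S" using polar_mem by blast
            moreover have "\<forall>x\<in>P. (x - p) \<bullet> A y = 0" using kerP adj by (metis inner_zero_left)
            ultimately have "A y \<in> C" unfolding C_def by blast
            then obtain z where z: "z \<in> convex hull (g ` E)" "A z = A y" using AC by force
            have "z = y" using adj_inj[OF lf] z hullR yR unfolding A_def by blast
            then show "y \<in> convex hull (g ` E)" using z by simp
          qed
          show "convex hull (g ` E) \<subseteq> polar_wrt (range \<pi>) (\<pi> ` msum P Q) (\<pi> m)"
          proof
            fix z assume z: "z \<in> convex hull (g ` E)"
            then have "A z \<in> C" using AC by blast
            then have "A z \<in> convex hull S" unfolding C_def by blast
            then have "\<forall>x\<in>msum P Q. (x - m) \<bullet> A z \<ge> -1" using polar_mem by blast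
            then show "z \<in> polar_wrt (range \<pi>) (\<pi> ` msum P Q) (\<pi> m)"
              using z hullR unfolding polar_wrt_def key[symmetric] by auto
          qed
        qed
      qed
    qed
  qed
qed

end
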